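(* Let $\boldsymbol{\lambda}\in\Delta_N$, $\boldsymbol{\nu}=(\nu_1,\dots,\nu_N)$, $\widetilde{\boldsymbol{\nu}}=(\widetilde\nu_1,\dots,\widetilde\nu_N)\in\mathcal{P}_1(\mathbb{R})^N$ and $\theta\in[0,1]$. Then $$W_1(\mathrm{VMed}_{\boldsymbol{\lambda}}(\theta,\boldsymbol{\nu}),\mathrm{VMed}_{\boldsymbol{\lambda}}(\theta,\widetilde{\boldsymbol{\nu}}))\le\sum_{i=1}^NW_1(\nu_i,\widetilde\nu_i)$$ and $$W_1(\mathrm{HMed}_{\boldsymbol{\lambda}}(\theta,\boldsymbol{\nu}),\mathrm{HMed}_{\boldsymbol{\lambda}}(\theta,\widetilde{\boldsymbol{\nu}}))\le\sum_{i=1}^NW_1(\nu_i,\widetilde\nu_i).$$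
   Context: $\Delta_N$ is the unit simplex of $\mathbb{R}^N$; $\mathcal{P}_1(\mathbb{R})$ denotes Borel probability measures on $\mathbb{R}$ with finite first moment and $W_1$ the 1-Wasserstein distance. For $\nu\in\mathcal{P}_1(\mathbb{R})$, $F_\nu(x)=\nu((-\infty,x])$ and $Q_\nu(t)=\inf\{x:F_\nu(x)\ge t\}$. For $\mathbf{x}\in\mathbb{R}^N$, $\mathrm{M}^-_{\boldsymbol{\lambda}}(\mathbf{x})=\inf\{y:\sum_{i:x_i\le y}\lambda_i\ge\frac12\}$, $\mathrm{M}^+_{\boldsymbol{\lambda}}(\mathbf{x})=\sup\{y:\sum_{i:x_i<y}\lambda_i\le\frac12\}$. Vertical selection: $\mathrm{VMed}_{\boldsymbol{\lambda}}(\theta,\boldsymbol{\nu})$ is the probability measure with cdf $(1-\theta)\mathrm{M}^-_{\boldsymbol{\lambda}}(F_{\nu_1}(x),\dots,F_{\nu_N}(x))+\theta\mathrm{M}^+_{\boldsymbol{\lambda}}(F_{\nu_1}(x),\dots,F_{\nu_N}(x))$. Horizontal selection: $\mathrm{HMed}_{\boldsymbol{\lambda}}(\theta,\boldsymbol{\nu})$ is the probability measure whose quantile function is, for $t\in(0,1)$, $(1-\theta)\mathrm{M}^-_{\boldsymbol{\lambda}}(Q_{\nu_1}(t),\dots,Q_{\nu_N}(t))+\theta\mathrm{M}^+_{\boldsymbol{\lambda}}(Q_{\nu_1}(t),\dots,Q_{\nu_N}(t))$. Both belong to $\mathcal{P}_1(\mathbb{R})$. *)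

theory Defs
  imports "HOL-Probability.Probability"
begin

definition in_simplex :: "nat \<Rightarrow> (nat \<Rightarrow> real) \<Rightarrow> bool" where
  "in_simplex N lam \<longleftrightarrow> (\<forall>i\<in>{1..N}. 0 \<le> lam i) \<and> (\<Sum>i=1..N. lam i) = 1"

definition P1 :: "real measure \<Rightarrow> bool" where
  "P1 \<nu> \<longleftrightarrow> real_distribution \<nu> \<and> integrable \<nu> (\<lambda>x. x)"

definition couplings :: "real measure \<Rightarrow> real measure \<Rightarrow> (real \<times> real) measure set" where
  "couplings \<mu> \<nu> = {\<pi>. prob_space \<pi> \<and> sets \<pi> = sets (borel :: (real \<times> real) measure)
      \<and> distr \<pi> borel fst = \<mu> \<and> distr \<pi> borel snd = \<nu>}"

definition W1 :: "real measure \<Rightarrow> real measure \<Rightarrow> real" where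
  "W1 \<mu> \<nu> = enn2real (INF \<pi>\<in>couplings \<mu> \<nu>. \<integral>\<^sup>+ p. ennreal \<bar>fst p - snd p\<bar> \<partial>\<pi>)"

definition quantile :: "real measure \<Rightarrow> real \<Rightarrow> real" where
  "quantile \<nu> t = Inf {x. t \<le> cdf \<nu> x}"

definition Mminus :: "nat \<Rightarrow> (nat \<Rightarrow> real) \<Rightarrow> (nat \<Rightarrow> real) \<Rightarrow> real" where
  "Mminus N lam x = Inf {y. (\<Sum>i | i \<in> {1..N} \<and> x i \<le> y. lam i) \<ge> 1/2}"

definition Mplus :: "nat \<Rightarrow> (nat \<Rightarrow> real) \<Rightarrow> (nat \<Rightarrow> real) \<Rightarrow> real" where
  "Mplus N lam x = Sup {y. (\<Sum>i | i \<in> {1..N} \<and> x i < y. lam i) \<le> 1/2}"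

definition VMed :: "nat \<Rightarrow> (nat \<Rightarrow> real) \<Rightarrow> real \<Rightarrow> (nat \<Rightarrow> real measure) \<Rightarrow> real measure" where
  "VMed N lam \<theta> \<nu> = (THE \<mu>. real_distribution \<mu> \<and>
     (\<forall>x. cdf \<mu> x = (1 - \<theta>) * Mminus N lam (\<lambda>i. cdf (\<nu> i) x)
                    + \<theta> * Mplus N lam (\<lambda>i. cdf (\<nu> i) x)))"

definition HMed :: "nat \<Rightarrow> (nat \<Rightarrow> real) \<Rightarrow> real \<Rightarrow> (nat \<Rightarrow> real measure) \<Rightarrow> real measure" where
  "HMed N lam \<theta> \<nu> = (THE \<mu>. real_distribution \<mu> \<and>
     (\<forall>t\<in>{0<..<1}. quantile \<mu> t = (1 - \<theta>) * Mminus N lam (\<lambda>i. quantile (\<nu> i) t)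
                    + \<theta> * Mplus N lam (\<lambda>i. quantile (\<nu> i) t)))"

end

theory Submission
  imports Defs
begin

lemma sum_abs_bound:
  fixes b :: "nat \<Rightarrow> real"
  assumes "i \<in> {1..N}" shows "\<bar>b i\<bar> \<le> (\<Sum>j=1..N. \<bar>b j\<bar>)"
  using assms by (intro member_le_sum) auto
lemma Mminus_le:
  assumes lam: "\<forall>i\<in>{1..N}. 0 \<le> lam i" "(\<Sum>i=1..N. lam i) = 1"
    and ab: "\<forall>i\<in>{1..N}. a i \<le> b i + d"
  shows "Mminus N lam a \<le> Mminus N lam b + d"
proof -
  define S where "S c = {y. (\<Sum>i | i \<in> {1..N} \<and> c i \<le> y. lam i) \<ge> 1/2}" for c :: "nat \<Rightarrow> real"
  have ne: "S c \<noteq> {}" for c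
  proof -
    have "{i. i \<in> {1..N} \<and> c i \<le> (\<Sum>j=1..N. \<bar>c j\<bar>)} = {1..N}"
      using sum_abs_bound[of _ N c] by force
    then have "(\<Sum>i | i \<in> {1..N} \<and> c i \<le> (\<Sum>j=1..N. \<bar>c j\<bar>). lam i) = sum lam {1..N}" by (rule arg_cong)
    then have "(\<Sum>j=1..N. \<bar>c j\<bar>) \<in> S c" using lam by (simp add: S_def)
    then show ?thesis by blast
  qed
  have bdd: "bdd_below (S c)" for c
  proof (rule bdd_belowI)
    fix y assume y: "y \<in> S c"
    show "- (\<Sum>j=1..N. \<bar>c j\<bar>) \<le> y"
    proof (rule ccontr)
      assume "\<not> ?thesis"
      then have "{i. i \<in> {1..N} \<and> c i \<le> y} = {}"
        using sum_abs_bound[of _ N c] by force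
      then have "(\<Sum>i | i \<in> {1..N} \<and> c i \<le> y. lam i) = sum lam {}" by (rule arg_cong)
      then show False using y by (simp add: S_def)
    qed
  qed
  have step: "y + d \<in> S a" if "y \<in> S b" for y
  proof -
    have "(\<Sum>i | i \<in> {1..N} \<and> b i \<le> y. lam i) \<le> (\<Sum>i | i \<in> {1..N} \<and> a i \<le> y + d. lam i)"
      using ab lam by (intro sum_mono2) force+
    then show ?thesis using that by (simp add: S_def)
  qed
  have "Inf (S a) - d \<le> Inf (S b)"
  proof (rule cInf_greatest[OF ne])
    fix y assume "y \<in> S b"
    then have "Inf (S a) \<le> y + d" by (rule cInf_lower[OF step bdd])
    then show "Inf (S a) - d \<le> y" by simp
  qed
  then show ?thesis unfolding Mminus_def S_def by simp
qed

lemma Mplus_le: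
  assumes lam: "\<forall>i\<in>{1..N}. 0 \<le> lam i" "(\<Sum>i=1..N. lam i) = 1"
    and ab: "\<forall>i\<in>{1..N}. a i \<le> b i + d"
  shows "Mplus N lam a \<le> Mplus N lam b + d"
proof -
  define S where "S c = {y. (\<Sum>i | i \<in> {1..N} \<and> c i < y. lam i) \<le> 1/2}" for c :: "nat \<Rightarrow> real"
  have ne: "S c \<noteq> {}" for c
  proof -
    have "{i. i \<in> {1..N} \<and> c i < - (\<Sum>j=1..N. \<bar>c j\<bar>)} = {}"
      using sum_abs_bound[of _ N c] by force
    then have "(\<Sum>i | i \<in> {1..N} \<and> c i < - (\<Sum>j=1..N. \<bar>c j\<bar>). lam i) = sum lam {}" by (rule arg_cong)
    then have "- (\<Sum>j=1..N. \<bar>c j\<bar>) \<in> S c" by (simp add: S_def)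
    then show ?thesis by blast
  qed
  have bdd: "bdd_above (S c)" for c
  proof (rule bdd_aboveI)
    fix y assume y: "y \<in> S c"
    show "y \<le> (\<Sum>j=1..N. \<bar>c j\<bar>) + 1"
    proof (rule ccontr)
      assume "\<not> ?thesis"
      then have "{i. i \<in> {1..N} \<and> c i < y} = {1..N}"
        using sum_abs_bound[of _ N c] by force
      then have "(\<Sum>i | i \<in> {1..N} \<and> c i < y. lam i) = sum lam {1..N}" by (rule arg_cong)
      then show False using y lam by (simp add: S_def)
    qed
  qed
  have step: "y - d \<in> S b" if "y \<in> S a" for y
  proof -
    have "(\<Sum>i | i \<in> {1..N} \<and> b i < y - d. lam i) \<le> (\<Sum>i | i \<in> {1..N} \<and> a i < y. lam i)"
      using ab lam by (intro sum_mono2) force+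
    then show ?thesis using that by (simp add: S_def)
  qed
  have "Sup (S a) \<le> Sup (S b) + d"
  proof (rule cSup_least[OF ne])
    fix y assume "y \<in> S a"
    then have "y - d \<le> Sup (S b)" by (rule cSup_upper[OF step bdd])
    then show "y \<le> Sup (S b) + d" by simp
  qed
  then show ?thesis unfolding Mplus_def S_def by simp
qed

lemma Mminus_const:
  assumes lam: "(\<Sum>i=1..N. lam i) = 1"
  shows "Mminus N lam (\<lambda>i. c) = c"
proof -
  have e: "(\<Sum>i | i \<in> {1..N} \<and> c \<le> y. lam i) = (if c \<le> y then 1 else 0)" for y
  proof -
    have "{i. i \<in> {1..N} \<and> c \<le> y} = (if c \<le> y then {1..N} else {})" by auto
    then have "(\<Sum>i | i \<in> {1..N} \<and> c \<le> y. lam i) = sum lam (if c \<le> y then {1..N} else {})" by (rule arg_cong)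
    then show ?thesis using lam by (simp split: if_splits)
  qed
  have "{y. (\<Sum>i | i \<in> {1..N} \<and> c \<le> y. lam i) \<ge> 1/2} = {c..}"
    unfolding e by auto
  then show ?thesis unfolding Mminus_def by simp
qed

lemma Mplus_const:
  assumes lam: "(\<Sum>i=1..N. lam i) = 1"
  shows "Mplus N lam (\<lambda>i. c) = c"
proof -
  have e: "(\<Sum>i | i \<in> {1..N} \<and> c < y. lam i) = (if c < y then 1 else 0)" for y
  proof -
    have "{i. i \<in> {1..N} \<and> c < y} = (if c < y then {1..N} else {})" by auto
    then have "(\<Sum>i | i \<in> {1..N} \<and> c < y. lam i) = sum lam (if c < y then {1..N} else {})" by (rule arg_cong)
    then show ?thesis using lam by (simp split: if_splits)
  qed
  have "{y. (\<Sum>i | i \<in> {1..N} \<and> c < y. lam i) \<le> 1/2} = {..c}"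
    unfolding e by (auto simp: not_less[symmetric])
  then show ?thesis unfolding Mplus_def by simp
qed


definition Cmb :: "nat \<Rightarrow> (nat \<Rightarrow> real) \<Rightarrow> real \<Rightarrow> (nat \<Rightarrow> real) \<Rightarrow> real" where
  "Cmb N lam \<theta> a = (1 - \<theta>) * Mminus N lam a + \<theta> * Mplus N lam a"

lemma Cmb_le:
  assumes "in_simplex N lam" "0 \<le> \<theta>" "\<theta> \<le> 1" "\<forall>i\<in>{1..N}. a i \<le> b i + d"
  shows "Cmb N lam \<theta> a \<le> Cmb N lam \<theta> b + d"
proof -
  have l: "\<forall>i\<in>{1..N}. 0 \<le> lam i" "(\<Sum>i=1..N. lam i) = 1" using assms(1) by (auto simp: in_simplex_def)
  have "(1 - \<theta>) * Mminus N lam a \<le> (1 - \<theta>) * (Mminus N lam b + d)"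
    using Mminus_le[OF l assms(4)] assms by (intro mult_left_mono) auto
  moreover have "\<theta> * Mplus N lam a \<le> \<theta> * (Mplus N lam b + d)"
    using Mplus_le[OF l assms(4)] assms by (intro mult_left_mono) auto
  ultimately show ?thesis unfolding Cmb_def by (simp add: algebra_simps)
qed

lemma Cmb_mono:
  assumes "in_simplex N lam" "0 \<le> \<theta>" "\<theta> \<le> 1" "\<forall>i\<in>{1..N}. a i \<le> b i"
  shows "Cmb N lam \<theta> a \<le> Cmb N lam \<theta> b"
  using Cmb_le[OF assms(1-3), of a b 0] assms(4) by simp

lemma Cmb_lip:
  assumes "in_simplex N lam" "0 \<le> \<theta>" "\<theta> \<le> 1"
  shows "\<bar>Cmb N lam \<theta> a - Cmb N lam \<theta> b\<bar> \<le> (\<Sum>i=1..N. \<bar>a i - b i\<bar>)"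
proof -
  have 1: "\<bar>c i - e i\<bar> \<le> (\<Sum>i=1..N. \<bar>c i - e i\<bar>)" if "i \<in> {1..N}" for c e :: "nat \<Rightarrow> real" and i
    using sum_abs_bound[OF that, of "\<lambda>i. c i - e i"] by simp
  have 2: "\<forall>i\<in>{1..N}. a i \<le> b i + (\<Sum>i=1..N. \<bar>a i - b i\<bar>)"
    "\<forall>i\<in>{1..N}. b i \<le> a i + (\<Sum>i=1..N. \<bar>a i - b i\<bar>)"
  proof (safe)
    fix i assume i: "i \<in> {1..N}"
    from 1[OF i, of a b] show "a i \<le> b i + (\<Sum>i=1..N. \<bar>a i - b i\<bar>)" "b i \<le> a i + (\<Sum>i=1..N. \<bar>a i - b i\<bar>)"
      by (simp_all add: abs_le_iff)
  qed
  have "Cmb N lam \<theta> a \<le> Cmb N lam \<theta> b + (\<Sum>i=1..N. \<bar>a i - b i\<bar>)"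
    using 2 by (intro Cmb_le[OF assms])
  moreover have "Cmb N lam \<theta> b \<le> Cmb N lam \<theta> a + (\<Sum>i=1..N. \<bar>a i - b i\<bar>)"
    using 2 by (intro Cmb_le[OF assms])
  ultimately show ?thesis by linarith
qed

lemma Cmb_const:
  assumes "in_simplex N lam"
  shows "Cmb N lam \<theta> (\<lambda>i. c) = c"
  using assms Mminus_const[where c=c] Mplus_const[where c=c]
  by (simp add: in_simplex_def Cmb_def algebra_simps)

lemma Cmb_tendsto:
  assumes "in_simplex N lam" "0 \<le> \<theta>" "\<theta> \<le> 1"
    and lim: "\<forall>i\<in>{1..N}. ((\<lambda>s. f i s) \<longlongrightarrow> l i) F"
  shows "((\<lambda>s. Cmb N lam \<theta> (\<lambda>i. f i s)) \<longlongrightarrow> Cmb N lam \<theta> l) F"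
proof -
  have "((\<lambda>s. \<Sum>i=1..N. \<bar>f i s - l i\<bar>) \<longlongrightarrow> 0) F"
  proof (rule tendsto_null_sum)
    fix i assume "i \<in> {1..N}"
    then have "((\<lambda>s. f i s - l i) \<longlongrightarrow> 0) F" using lim LIM_zero by blast
    then show "((\<lambda>s. \<bar>f i s - l i\<bar>) \<longlongrightarrow> 0) F" by (rule tendsto_rabs_zero)
  qed
  then have "((\<lambda>s. Cmb N lam \<theta> (\<lambda>i. f i s) - Cmb N lam \<theta> l) \<longlongrightarrow> 0) F"
    by (rule Lim_null_comparison[rotated]) (intro always_eventually allI, unfold real_norm_def, rule Cmb_lip[OF assms(1-3)])
  then show ?thesis by (rule LIM_zero_cancel)
qed


lemma tonelli_abs:
  assumes P: "prob_space M" and X: "X \<in> borel_measurable M" and Y: "Y \<in> borel_measurable M"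
  shows "(\<integral>\<^sup>+\<omega>. ennreal \<bar>X \<omega> - Y \<omega>\<bar> \<partial>M) =
    (\<integral>\<^sup>+x. emeasure M {\<omega>\<in>space M. X \<omega> \<le> x \<and> x < Y \<omega>} + emeasure M {\<omega>\<in>space M. Y \<omega> \<le> x \<and> x < X \<omega>} \<partial>lborel)"
proof -
  interpret M: prob_space M by fact
  interpret pair_sigma_finite M lborel
    by (intro pair_sigma_finite.intro M.sigma_finite_measure_axioms lborel.sigma_finite_measure_axioms)
  define f :: "'a \<times> real \<Rightarrow> ennreal" where
    "f p = (if X (fst p) \<le> snd p \<and> snd p < Y (fst p) then 1 else 0) + (if Y (fst p) \<le> snd p \<and> snd p < X (fst p) then 1 else 0)" for p
  have fm: "f \<in> borel_measurable (M \<Otimes>\<^sub>M lborel)"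
    unfolding f_def using X Y by measurable
  have inner1: "(\<integral>\<^sup>+x. f (\<omega>, x) \<partial>lborel) = ennreal \<bar>X \<omega> - Y \<omega>\<bar>" for \<omega>
  proof -
    have "(\<integral>\<^sup>+x. f (\<omega>, x) \<partial>lborel) = (\<integral>\<^sup>+x. indicator {X \<omega>..<Y \<omega>} x + indicator {Y \<omega>..<X \<omega>} x \<partial>lborel)"
      by (intro nn_integral_cong) (simp add: f_def indicator_def)
    also have "\<dots> = emeasure lborel {X \<omega>..<Y \<omega>} + emeasure lborel {Y \<omega>..<X \<omega>}"
      by (subst nn_integral_add) auto
    also have "\<dots> = ennreal \<bar>X \<omega> - Y \<omega>\<bar>"
      by (cases "X \<omega> \<le> Y \<omega>") auto
    finally show ?thesis .
  qed
  have inner2: "(\<integral>\<^sup>+\<omega>. f (\<omega>, x) \<partial>M) = emeasure M {\<omega>\<in>space M. X \<omega> \<le> x \<and> x < Y \<omega>} + emeasure M {\<omega>\<in>space M. Y \<omega> \<le> x \<and> x < X \<omega>}" for x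
  proof -
    have s1: "{\<omega>\<in>space M. X \<omega> \<le> x \<and> x < Y \<omega>} \<in> sets M" using X Y by measurable
    have s2: "{\<omega>\<in>space M. Y \<omega> \<le> x \<and> x < X \<omega>} \<in> sets M" using X Y by measurable
    have "(\<integral>\<^sup>+\<omega>. f (\<omega>, x) \<partial>M) = (\<integral>\<^sup>+\<omega>. indicator {\<omega>\<in>space M. X \<omega> \<le> x \<and> x < Y \<omega>} \<omega> + indicator {\<omega>\<in>space M. Y \<omega> \<le> x \<and> x < X \<omega>} \<omega> \<partial>M)"
      by (intro nn_integral_cong) (simp add: f_def indicator_def)
    also have "\<dots> = emeasure M {\<omega>\<in>space M. X \<omega> \<le> x \<and> x < Y \<omega>} + emeasure M {\<omega>\<in>space M. Y \<omega> \<le> x \<and> x < X \<omega>}"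
      using s1 s2 by (subst nn_integral_add) auto
    finally show ?thesis .
  qed
  have "(\<integral>\<^sup>+\<omega>. ennreal \<bar>X \<omega> - Y \<omega>\<bar> \<partial>M) = (\<integral>\<^sup>+\<omega>. \<integral>\<^sup>+x. f (\<omega>, x) \<partial>lborel \<partial>M)"
    by (simp add: inner1)
  also have "\<dots> = (\<integral>\<^sup>+x. \<integral>\<^sup>+\<omega>. f (\<omega>, x) \<partial>M \<partial>lborel)"
    using Fubini'[of "\<lambda>\<omega> x. f (\<omega>, x)"] fm by (simp add: case_prod_beta')
  also have "\<dots> = (\<integral>\<^sup>+x. emeasure M {\<omega>\<in>space M. X \<omega> \<le> x \<and> x < Y \<omega>} + emeasure M {\<omega>\<in>space M. Y \<omega> \<le> x \<and> x < X \<omega>} \<partial>lborel)"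
    by (simp add: inner2)
  finally show ?thesis .
qed


lemma quantile_galois:
  assumes "real_distribution \<mu>" "0 < t" "t < 1"
  shows "quantile \<mu> t \<le> x \<longleftrightarrow> t \<le> cdf \<mu> x"
proof -
  interpret real_distribution \<mu> by fact
  define S where "S = {x. t \<le> cdf \<mu> x}"
  have "\<forall>\<^sub>F x in at_top. t < cdf \<mu> x"
    using order_tendstoD(1)[OF cdf_lim_at_top_prob assms(3)] .
  then obtain x0 where "\<forall>x\<ge>x0. t < cdf \<mu> x" unfolding eventually_at_top_linorder by blast
  then have "t < cdf \<mu> x0" by simp
  then have "x0 \<in> S" unfolding S_def by simp
  then have ne: "S \<noteq> {}" by blast
  have "\<forall>\<^sub>F x in at_bot. cdf \<mu> x < t"
    using order_tendstoD(2)[OF cdf_lim_at_bot assms(2)] .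
  then obtain b where b: "\<forall>x\<le>b. cdf \<mu> x < t" unfolding eventually_at_bot_linorder by blast
  have bdd: "bdd_below S"
  proof (rule bdd_belowI)
    fix y assume "y \<in> S" then have y: "t \<le> cdf \<mu> y" unfolding S_def by simp
    show "b \<le> y"
    proof (rule ccontr)
      assume "\<not> b \<le> y" then have "cdf \<mu> y < t" using b by simp
      then show False using y by simp
    qed
  qed
  have inS: "Inf S \<in> S"
  proof -
    have lim: "(cdf \<mu> \<longlongrightarrow> cdf \<mu> (Inf S)) (at_right (Inf S))"
      using cdf_is_right_cont[of "Inf S"] by (simp add: continuous_within)
    have ev: "\<forall>\<^sub>F z in at_right (Inf S). t \<le> cdf \<mu> z"
      using eventually_at_right_less
    proof (rule eventually_mono)
      fix z assume "Inf S < z"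
      then obtain s where "s \<in> S" "s < z" using cInf_less_iff[OF ne bdd] by blast
      then show "t \<le> cdf \<mu> z" unfolding S_def using cdf_nondecreasing[of s z] by auto
    qed
    have "t \<le> cdf \<mu> (Inf S)"
      by (rule tendsto_lowerbound[OF lim ev]) simp
    then show ?thesis unfolding S_def by simp
  qed
  show ?thesis
  proof
    assume "quantile \<mu> t \<le> x"
    then have "Inf S \<le> x" unfolding S_def quantile_def .
    then show "t \<le> cdf \<mu> x" using inS cdf_nondecreasing[of "Inf S" x] unfolding S_def by auto
  next
    assume "t \<le> cdf \<mu> x"
    then have "x \<in> S" unfolding S_def by simp
    then show "quantile \<mu> t \<le> x" unfolding quantile_def S_def[symmetric] by (rule cInf_lower[OF _ bdd])
  qed
qed


lemma quantile_mono:
  assumes "real_distribution \<mu>" "0 < s" "s \<le> t" "t < 1"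
  shows "quantile \<mu> s \<le> quantile \<mu> t"
proof -
  have t: "0 < t" "t < 1" "0 < s" "s < 1" using assms by auto
  have "t \<le> cdf \<mu> (quantile \<mu> t)" using quantile_galois[OF assms(1) t(1,2), of "quantile \<mu> t"] by blast
  then have "s \<le> cdf \<mu> (quantile \<mu> t)" using assms(3) by linarith
  then show ?thesis using quantile_galois[OF assms(1) t(3,4), of "quantile \<mu> t"] by blast
qed

lemma quantile_left_cont:
  assumes "real_distribution \<mu>" "0 < t" "t < 1"
  shows "(quantile \<mu> \<longlongrightarrow> quantile \<mu> t) (at_left t)"
proof (rule order_tendstoI)
  fix a assume a: "a < quantile \<mu> t"
  then have Fa: "cdf \<mu> a < t" using quantile_galois[OF assms, of a] by simp
  have "max (cdf \<mu> a) 0 < t" using Fa assms by simp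
  from eventually_at_left_real[OF this]
  show "\<forall>\<^sub>F s in at_left t. a < quantile \<mu> s"
  proof (rule eventually_mono)
    fix s assume s: "s \<in> {max (cdf \<mu> a) 0<..<t}"
    then have "\<not> quantile \<mu> s \<le> a" using quantile_galois[OF assms(1), of s a] assms by auto
    then show "a < quantile \<mu> s" by simp
  qed
next
  fix a assume a: "quantile \<mu> t < a"
  from eventually_at_left_real[OF assms(2)]
  show "\<forall>\<^sub>F s in at_left t. quantile \<mu> s < a"
  proof (rule eventually_mono)
    fix s assume s: "s \<in> {0<..<t}"
    then show "quantile \<mu> s < a" using quantile_mono[OF assms(1), of s t] assms a by auto
  qed
qed

definition U :: "real measure" where "U = restrict_space lborel {0<..<1}"

lemma space_U [simp]: "space U = {0<..<1}"
  by (simp add: U_def space_restrict_space)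

lemma prob_space_U: "prob_space U"
  unfolding U_def by (rule prob_space_restrict_space) auto

lemma sets_U: "A \<in> sets borel \<Longrightarrow> A \<subseteq> {0<..<1} \<Longrightarrow> A \<in> sets U"
  unfolding U_def by (auto simp: sets_restrict_space_iff)

lemma emeasure_U: "A \<subseteq> {0<..<1} \<Longrightarrow> emeasure U A = emeasure lborel A"
  unfolding U_def by (rule emeasure_restrict_space) auto

lemma measure_U: "A \<subseteq> {0<..<1} \<Longrightarrow> measure U A = measure lborel A"
  by (simp add: measure_def emeasure_U)

lemma measure_lborel_cut:
  assumes "0 \<le> c" "c \<le> (1::real)"
  shows "measure lborel ({0<..<1} \<inter> {..c}) = c"
proof (cases "c < 1")
  case True
  then have e: "{0<..<1} \<inter> {..c} = {0<..c}" by auto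
  show ?thesis unfolding e using assms by simp
next
  case False
  then have e: "{0<..<1} \<inter> {..c} = {0<..<1::real}" using assms by auto
  show ?thesis unfolding e using assms False by simp
qed

lemma quantile_measurable:
  assumes "real_distribution \<mu>"
  shows "quantile \<mu> \<in> borel_measurable U"
  unfolding borel_measurable_iff_le
proof
  fix a
  have e: "{w \<in> space U. quantile \<mu> w \<le> a} = {0<..<1} \<inter> {..cdf \<mu> a}"
  proof (intro set_eqI iffI)
    fix w assume "w \<in> {w \<in> space U. quantile \<mu> w \<le> a}"
    then show "w \<in> {0<..<1} \<inter> {..cdf \<mu> a}" using quantile_galois[OF assms, of w a] by simp
  next
    fix w assume "w \<in> {0<..<1} \<inter> {..cdf \<mu> a}"
    then show "w \<in> {w \<in> space U. quantile \<mu> w \<le> a}" using quantile_galois[OF assms, of w a] by simp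
  qed
  show "{w \<in> space U. quantile \<mu> w \<le> a} \<in> sets U" unfolding e by (rule sets_U) auto
qed

lemma distr_U_quantile:
  assumes "real_distribution \<mu>"
  shows "distr U borel (quantile \<mu>) = \<mu>"
proof -
  interpret U: prob_space U by (rule prob_space_U)
  interpret real_distribution \<mu> by fact
  have rd: "real_distribution (distr U borel (quantile \<mu>))"
    using quantile_measurable[OF assms] by simp
  have "cdf (distr U borel (quantile \<mu>)) x = cdf \<mu> x" for x
  proof -
    have e: "quantile \<mu> -` {..x} \<inter> space U = {0<..<1} \<inter> {..cdf \<mu> x}"
    proof (intro set_eqI iffI)
      fix w assume "w \<in> quantile \<mu> -` {..x} \<inter> space U"
      then show "w \<in> {0<..<1} \<inter> {..cdf \<mu> x}" using quantile_galois[OF assms, of w x] by simp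
    next
      fix w assume "w \<in> {0<..<1} \<inter> {..cdf \<mu> x}"
      then show "w \<in> quantile \<mu> -` {..x} \<inter> space U" using quantile_galois[OF assms, of w x] by simp
    qed
    have "cdf (distr U borel (quantile \<mu>)) x = measure U (quantile \<mu> -` {..x} \<inter> space U)"
      unfolding cdf_def using quantile_measurable[OF assms] by (subst measure_distr) auto
    also have "\<dots> = measure lborel ({0<..<1} \<inter> {..cdf \<mu> x})"
      unfolding e by (rule measure_U) auto
    finally have "cdf (distr U borel (quantile \<mu>)) x = measure lborel ({0<..<1} \<inter> {..cdf \<mu> x})" .
    also have "\<dots> = cdf \<mu> x" by (rule measure_lborel_cut) (auto simp: cdf_nonneg cdf_bounded_prob)
    finally show ?thesis .
  qed
  then show ?thesis using cdf_unique[OF rd assms] by blast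
qed


lemma fst_borel: "fst \<in> borel_measurable (borel :: (real \<times> real) measure)"
  by (intro borel_measurable_continuous_onI continuous_on_fst continuous_on_id)

lemma snd_borel: "snd \<in> borel_measurable (borel :: (real \<times> real) measure)"
  by (intro borel_measurable_continuous_onI continuous_on_snd continuous_on_id)

lemma cdf_diff_le:
  fixes X Y :: "'a \<Rightarrow> real"
  assumes P: "prob_space M" and X: "X \<in> borel_measurable M" and Y: "Y \<in> borel_measurable M"
  shows "ennreal \<bar>measure M {\<omega>\<in>space M. X \<omega> \<le> x} - measure M {\<omega>\<in>space M. Y \<omega> \<le> x}\<bar>
    \<le> emeasure M {\<omega>\<in>space M. X \<omega> \<le> x \<and> x < Y \<omega>} + emeasure M {\<omega>\<in>space M. Y \<omega> \<le> x \<and> x < X \<omega>}"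
proof -
  interpret M: prob_space M by fact
  define A where "A = {\<omega>\<in>space M. X \<omega> \<le> x}"
  define B where "B = {\<omega>\<in>space M. Y \<omega> \<le> x}"
  define C where "C = {\<omega>\<in>space M. X \<omega> \<le> x \<and> x < Y \<omega>}"
  define D where "D = {\<omega>\<in>space M. Y \<omega> \<le> x \<and> x < X \<omega>}"
  have s1: "A \<in> sets M" unfolding A_def using X[unfolded borel_measurable_iff_le] by blast
  have s2: "B \<in> sets M" unfolding B_def using Y[unfolded borel_measurable_iff_le] by blast
  have s3: "C \<in> sets M" unfolding C_def using X Y by measurable
  have s4: "D \<in> sets M" unfolding D_def using X Y by measurable
  note s = s1 s2 s3 s4
  have "measure M A \<le> measure M (C \<union> B)"
    using s by (intro M.finite_measure_mono) (auto simp: A_def B_def C_def)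
  also have "\<dots> \<le> measure M C + measure M B" using s by (intro measure_Un_le)
  finally have 1: "measure M A \<le> measure M C + measure M B" .
  have "measure M B \<le> measure M (D \<union> A)"
    using s by (intro M.finite_measure_mono) (auto simp: A_def B_def D_def)
  also have "\<dots> \<le> measure M D + measure M A" using s by (intro measure_Un_le)
  finally have 2: "measure M B \<le> measure M D + measure M A" .
  have "\<bar>measure M A - measure M B\<bar> \<le> measure M C + measure M D" using 1 2 measure_nonneg[of M C] measure_nonneg[of M D] by linarith
  then have "ennreal \<bar>measure M A - measure M B\<bar> \<le> ennreal (measure M C + measure M D)"
    by (rule ennreal_leI)
  also have "\<dots> = emeasure M C + emeasure M D"
    by (simp add: M.emeasure_eq_measure ennreal_plus)
  finally show ?thesis unfolding A_def B_def C_def D_def .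
qed

definition W1e :: "real measure \<Rightarrow> real measure \<Rightarrow> ennreal" where
  "W1e \<mu> \<nu> = (INF \<pi>\<in>couplings \<mu> \<nu>. \<integral>\<^sup>+ p. ennreal \<bar>fst p - snd p\<bar> \<partial>\<pi>)"

definition Dd :: "real measure \<Rightarrow> real measure \<Rightarrow> ennreal" where
  "Dd \<mu> \<nu> = (\<integral>\<^sup>+x. ennreal \<bar>cdf \<mu> x - cdf \<nu> x\<bar> \<partial>lborel)"

definition QI :: "real measure \<Rightarrow> real measure \<Rightarrow> ennreal" where
  "QI \<mu> \<nu> = (\<integral>\<^sup>+t. ennreal \<bar>quantile \<mu> t - quantile \<nu> t\<bar> \<partial>U)"

lemma W1_W1e: "W1 \<mu> \<nu> = enn2real (W1e \<mu> \<nu>)"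
  unfolding W1_def W1e_def ..

lemma Dd_le_W1e:
  assumes "real_distribution \<mu>" "real_distribution \<nu>"
  shows "Dd \<mu> \<nu> \<le> W1e \<mu> \<nu>"
  unfolding W1e_def
proof (rule INF_greatest)
  fix \<pi> assume "\<pi> \<in> couplings \<mu> \<nu>"
  then have P: "prob_space \<pi>" and S: "sets \<pi> = sets borel" and m1: "distr \<pi> borel fst = \<mu>" and m2: "distr \<pi> borel snd = \<nu>"
    by (auto simp: couplings_def)
  interpret pi: prob_space \<pi> by fact
  have f: "fst \<in> borel_measurable \<pi>" using fst_borel measurable_cong_sets[OF S refl] by blast
  have g: "snd \<in> borel_measurable \<pi>" using snd_borel measurable_cong_sets[OF S refl] by blast
  have c1: "cdf \<mu> x = measure \<pi> {\<omega>\<in>space \<pi>. fst \<omega> \<le> x}" for x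
  proof -
    have "cdf \<mu> x = measure (distr \<pi> borel fst) {..x}" by (simp add: cdf_def m1)
    also have "\<dots> = measure \<pi> (fst -` {..x} \<inter> space \<pi>)" using f by (subst measure_distr) auto
    also have "fst -` {..x} \<inter> space \<pi> = {\<omega>\<in>space \<pi>. fst \<omega> \<le> x}" by auto
    finally show ?thesis .
  qed
  have c2: "cdf \<nu> x = measure \<pi> {\<omega>\<in>space \<pi>. snd \<omega> \<le> x}" for x
  proof -
    have "cdf \<nu> x = measure (distr \<pi> borel snd) {..x}" by (simp add: cdf_def m2)
    also have "\<dots> = measure \<pi> (snd -` {..x} \<inter> space \<pi>)" using g by (subst measure_distr) auto
    also have "snd -` {..x} \<inter> space \<pi> = {\<omega>\<in>space \<pi>. snd \<omega> \<le> x}" by auto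
    finally show ?thesis .
  qed
  have "Dd \<mu> \<nu> \<le> (\<integral>\<^sup>+x. emeasure \<pi> {\<omega>\<in>space \<pi>. fst \<omega> \<le> x \<and> x < snd \<omega>} + emeasure \<pi> {\<omega>\<in>space \<pi>. snd \<omega> \<le> x \<and> x < fst \<omega>} \<partial>lborel)"
    unfolding Dd_def c1 c2 by (intro nn_integral_mono cdf_diff_le[OF P f g])
  also have "\<dots> = (\<integral>\<^sup>+ p. ennreal \<bar>fst p - snd p\<bar> \<partial>\<pi>)"
    by (rule tonelli_abs[OF P f g, symmetric])
  finally show "Dd \<mu> \<nu> \<le> (\<integral>\<^sup>+ p. ennreal \<bar>fst p - snd p\<bar> \<partial>\<pi>)" .
qed

lemma W1e_le_QI:
  assumes "real_distribution \<mu>" "real_distribution \<nu>"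
  shows "W1e \<mu> \<nu> \<le> QI \<mu> \<nu>"
proof -
  interpret U: prob_space U by (rule prob_space_U)
  have q1: "quantile \<mu> \<in> borel_measurable U" by (rule quantile_measurable[OF assms(1)])
  have q2: "quantile \<nu> \<in> borel_measurable U" by (rule quantile_measurable[OF assms(2)])
  define h where "h t = (quantile \<mu> t, quantile \<nu> t)" for t
  have hm: "h \<in> borel_measurable U" unfolding h_def using q1 q2 by (rule borel_measurable_Pair)
  define \<pi> where "\<pi> = distr U borel h"
  have "\<pi> \<in> couplings \<mu> \<nu>"
  proof -
    have "prob_space \<pi>" unfolding \<pi>_def using hm by (rule U.prob_space_distr)
    moreover have "sets \<pi> = sets borel" unfolding \<pi>_def by simp
    moreover have "distr \<pi> borel fst = \<mu>"
      unfolding \<pi>_def using hm fst_borel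
      by (subst distr_distr) (auto simp: comp_def h_def distr_U_quantile[OF assms(1)])
    moreover have "distr \<pi> borel snd = \<nu>"
      unfolding \<pi>_def using hm snd_borel
      by (subst distr_distr) (auto simp: comp_def h_def distr_U_quantile[OF assms(2)])
    ultimately show ?thesis unfolding couplings_def by blast
  qed
  then have "W1e \<mu> \<nu> \<le> (\<integral>\<^sup>+ p. ennreal \<bar>fst p - snd p\<bar> \<partial>\<pi>)"
    unfolding W1e_def by (rule INF_lower)
  also have "\<dots> = (\<integral>\<^sup>+ t. ennreal \<bar>fst (h t) - snd (h t)\<bar> \<partial>U)"
  proof -
    have am: "(\<lambda>p. \<bar>fst p - snd p\<bar>) \<in> borel_measurable (borel :: (real \<times> real) measure)"
      by (intro borel_measurable_continuous_onI continuous_intros)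
    then have "(\<lambda>p. ennreal \<bar>fst p - snd p\<bar>) \<in> borel_measurable (borel :: (real \<times> real) measure)"
      by measurable
    then show ?thesis unfolding \<pi>_def using hm by (subst nn_integral_distr) auto
  qed
  also have "\<dots> = QI \<mu> \<nu>" unfolding QI_def h_def by simp
  finally show ?thesis .
qed

lemma emeasure_cut2:
  assumes "0 \<le> a" "a \<le> 1" "0 \<le> b" "b \<le> (1::real)"
  shows "emeasure lborel ({0<..<1} \<inter> {a<..b}) = ennreal (max 0 (b - a))"
proof (cases "a < b")
  case False
  then have e: "{0<..<1} \<inter> {a<..b} = {}" by auto
  show ?thesis unfolding e using False by simp
next
  case True
  show ?thesis
  proof (cases "b < 1")
    case True
    then have e: "{0<..<1} \<inter> {a<..b} = {a<..b}" using assms by auto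
    show ?thesis unfolding e using True \<open>a < b\<close> by simp
  next
    case False
    then have e: "{0<..<1} \<inter> {a<..b} = {a<..<1}" using assms by auto
    show ?thesis unfolding e using False \<open>a < b\<close> assms by simp
  qed
qed

lemma QI_eq_Dd:
  assumes "real_distribution \<mu>" "real_distribution \<nu>"
  shows "QI \<mu> \<nu> = Dd \<mu> \<nu>"
proof -
  interpret U: prob_space U by (rule prob_space_U)
  interpret m: real_distribution \<mu> by fact
  interpret n: real_distribution \<nu> by fact
  have q1: "quantile \<mu> \<in> borel_measurable U" by (rule quantile_measurable[OF assms(1)])
  have q2: "quantile \<nu> \<in> borel_measurable U" by (rule quantile_measurable[OF assms(2)])
  have key: "emeasure U {t\<in>space U. quantile \<mu> t \<le> x \<and> x < quantile \<nu> t} = emeasure lborel ({0<..<1} \<inter> {cdf \<nu> x<..cdf \<mu> x})"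
    if "real_distribution \<mu>" "real_distribution \<nu>" for \<mu> \<nu> x
  proof -
    have e: "{t\<in>space U. quantile \<mu> t \<le> x \<and> x < quantile \<nu> t} = {0<..<1} \<inter> {cdf \<nu> x<..cdf \<mu> x}"
    proof (intro set_eqI iffI)
      fix t assume "t \<in> {t\<in>space U. quantile \<mu> t \<le> x \<and> x < quantile \<nu> t}"
      then show "t \<in> {0<..<1} \<inter> {cdf \<nu> x<..cdf \<mu> x}"
        using quantile_galois[OF that(1), of t x] quantile_galois[OF that(2), of t x] by auto
    next
      fix t assume "t \<in> {0<..<1} \<inter> {cdf \<nu> x<..cdf \<mu> x}"
      then show "t \<in> {t\<in>space U. quantile \<mu> t \<le> x \<and> x < quantile \<nu> t}"
        using quantile_galois[OF that(1), of t x] quantile_galois[OF that(2), of t x] by auto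
    qed
    show ?thesis unfolding e by (rule emeasure_U) auto
  qed
  have "QI \<mu> \<nu> = (\<integral>\<^sup>+x. emeasure U {t\<in>space U. quantile \<mu> t \<le> x \<and> x < quantile \<nu> t} + emeasure U {t\<in>space U. quantile \<nu> t \<le> x \<and> x < quantile \<mu> t} \<partial>lborel)"
    unfolding QI_def by (rule tonelli_abs[OF prob_space_U q1 q2])
  also have "\<dots> = (\<integral>\<^sup>+x. ennreal \<bar>cdf \<mu> x - cdf \<nu> x\<bar> \<partial>lborel)"
  proof (intro nn_integral_cong)
    fix x
    have b: "0 \<le> cdf \<mu> x" "cdf \<mu> x \<le> 1" "0 \<le> cdf \<nu> x" "cdf \<nu> x \<le> 1"
      by (simp_all add: m.cdf_nonneg n.cdf_nonneg m.cdf_bounded_prob n.cdf_bounded_prob)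
    show "emeasure U {t\<in>space U. quantile \<mu> t \<le> x \<and> x < quantile \<nu> t} + emeasure U {t\<in>space U. quantile \<nu> t \<le> x \<and> x < quantile \<mu> t}
       = ennreal \<bar>cdf \<mu> x - cdf \<nu> x\<bar>"
      unfolding key[OF assms] key[OF assms(2,1)] emeasure_cut2[OF b(3,4,1,2)] emeasure_cut2[OF b]
      by (cases "cdf \<mu> x \<le> cdf \<nu> x") (simp_all add: ennreal_plus[symmetric] del: ennreal_plus)
  qed
  finally show ?thesis unfolding Dd_def .
qed


lemma rd_mono: "real_distribution \<mu> \<Longrightarrow> x \<le> y \<Longrightarrow> cdf \<mu> x \<le> cdf \<mu> y"
  by (rule finite_borel_measure.cdf_nondecreasing[OF real_distribution.finite_borel_measure_M])

lemma rd_rc: "real_distribution \<mu> \<Longrightarrow> (cdf \<mu> \<longlongrightarrow> cdf \<mu> a) (at_right a)"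
  using finite_borel_measure.cdf_is_right_cont[OF real_distribution.finite_borel_measure_M]
  by (simp add: continuous_within)

lemma rd_bot: "real_distribution \<mu> \<Longrightarrow> (cdf \<mu> \<longlongrightarrow> 0) at_bot"
  by (rule finite_borel_measure.cdf_lim_at_bot[OF real_distribution.finite_borel_measure_M])

lemma rd_top: "real_distribution \<mu> \<Longrightarrow> (cdf \<mu> \<longlongrightarrow> 1) at_top"
  by (rule real_distribution.cdf_lim_at_top_prob)

lemma cdf_meas:
  assumes "real_distribution \<mu>"
  shows "cdf \<mu> \<in> borel_measurable borel"
  using rd_mono[OF assms]
  by (intro borel_measurable_mono) (auto simp: mono_def)

lemma W1e_eq_Dd:
  assumes "real_distribution \<mu>" "real_distribution \<nu>"
  shows "W1e \<mu> \<nu> = Dd \<mu> \<nu>"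
  using W1e_le_QI[OF assms] QI_eq_Dd[OF assms] Dd_le_W1e[OF assms] by (metis antisym)

lemma D_le_int:
  fixes X Y :: "'a \<Rightarrow> real"
  assumes P: "prob_space M" and X: "X \<in> borel_measurable M" and Y: "Y \<in> borel_measurable M"
  shows "(\<integral>\<^sup>+x. ennreal \<bar>measure M {\<omega>\<in>space M. X \<omega> \<le> x} - measure M {\<omega>\<in>space M. Y \<omega> \<le> x}\<bar> \<partial>lborel)
     \<le> (\<integral>\<^sup>+\<omega>. ennreal \<bar>X \<omega> - Y \<omega>\<bar> \<partial>M)"
  unfolding tonelli_abs[OF P X Y] by (intro nn_integral_mono cdf_diff_le[OF P X Y])

lemma Dd_H0_finite:
  assumes "P1 \<nu>"
  shows "(\<integral>\<^sup>+x. ennreal \<bar>cdf \<nu> x - indicator {0..} x\<bar> \<partial>lborel) < \<infinity>"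
proof -
  have rd: "real_distribution \<nu>" and int: "integrable \<nu> (\<lambda>x. x)" using assms by (auto simp: P1_def)
  interpret real_distribution \<nu> by fact
  have idm: "(\<lambda>x. x) \<in> borel_measurable \<nu>" by simp
  have zm: "(\<lambda>x. 0::real) \<in> borel_measurable \<nu>" by simp
  have e1: "measure \<nu> {\<omega>\<in>space \<nu>. \<omega> \<le> x} = cdf \<nu> x" for x
    by (simp add: cdf_def atMost_def)
  have e2: "measure \<nu> {\<omega>\<in>space \<nu>. (0::real) \<le> x} = indicator {0..} x" for x
    using prob_space by (cases "0 \<le> x") simp_all
  have "(\<integral>\<^sup>+x. ennreal \<bar>cdf \<nu> x - indicator {0..} x\<bar> \<partial>lborel) \<le> (\<integral>\<^sup>+\<omega>. ennreal \<bar>\<omega> - 0\<bar> \<partial>\<nu>)"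
    using D_le_int[OF prob_space_axioms idm zm] unfolding e1 e2 .
  also have "\<dots> < \<infinity>" using int unfolding integrable_iff_bounded by simp
  finally show ?thesis .
qed

lemma Dd_finite:
  assumes "P1 \<nu>" "P1 \<nu>'"
  shows "Dd \<nu> \<nu>' < \<infinity>"
proof -
  have rd: "real_distribution \<nu>" "real_distribution \<nu>'" using assms by (auto simp: P1_def)
  have m: "(\<lambda>x. ennreal \<bar>cdf \<nu> x - indicator {0..} x\<bar>) \<in> borel_measurable lborel"
          "(\<lambda>x. ennreal \<bar>cdf \<nu>' x - indicator {0..} x\<bar>) \<in> borel_measurable lborel"
    using cdf_meas[OF rd(1)] cdf_meas[OF rd(2)] by measurable
  have "Dd \<nu> \<nu>' \<le> (\<integral>\<^sup>+x. ennreal \<bar>cdf \<nu> x - indicator {0..} x\<bar> + ennreal \<bar>cdf \<nu>' x - indicator {0..} x\<bar> \<partial>lborel)"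
    unfolding Dd_def
  proof (intro nn_integral_mono)
    fix x
    have "ennreal \<bar>cdf \<nu> x - cdf \<nu>' x\<bar> \<le> ennreal (\<bar>cdf \<nu> x - indicator {0..} x\<bar> + \<bar>cdf \<nu>' x - indicator {0..} x\<bar>)"
      by (intro ennreal_leI) linarith
    also have "\<dots> = ennreal \<bar>cdf \<nu> x - indicator {0..} x\<bar> + ennreal \<bar>cdf \<nu>' x - indicator {0..} x\<bar>"
      by (rule ennreal_plus) auto
    finally show "ennreal \<bar>cdf \<nu> x - cdf \<nu>' x\<bar> \<le> ennreal \<bar>cdf \<nu> x - indicator {0..} x\<bar> + ennreal \<bar>cdf \<nu>' x - indicator {0..} x\<bar>" .
  qed
  also have "\<dots> = (\<integral>\<^sup>+x. ennreal \<bar>cdf \<nu> x - indicator {0..} x\<bar> \<partial>lborel) + (\<integral>\<^sup>+x. ennreal \<bar>cdf \<nu>' x - indicator {0..} x\<bar> \<partial>lborel)"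
    using m by (intro nn_integral_add) auto
  also have "\<dots> < \<infinity>" using Dd_H0_finite[OF assms(1)] Dd_H0_finite[OF assms(2)] by simp
  finally show ?thesis .
qed

lemma W1e_finite:
  assumes "P1 \<nu>" "P1 \<nu>'"
  shows "W1e \<nu> \<nu>' < \<infinity>"
  using W1e_eq_Dd[of \<nu> \<nu>'] Dd_finite[OF assms] assms by (simp add: P1_def)

lemma VMed_eq:
  assumes lam: "in_simplex N lam" and th: "0 \<le> \<theta>" "\<theta> \<le> 1"
    and rd: "\<forall>i\<in>{1..N}. real_distribution (\<nu> i)"
  defines "H \<equiv> \<lambda>x. Cmb N lam \<theta> (\<lambda>i. cdf (\<nu> i) x)"
  shows "real_distribution (VMed N lam \<theta> \<nu>) \<and> cdf (VMed N lam \<theta> \<nu>) = H"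
proof -
  have mono: "H x \<le> H y" if "x \<le> y" for x y
    unfolding H_def using rd that by (intro Cmb_mono[OF lam th]) (auto intro: rd_mono)
  have rc: "continuous (at_right a) H" for a
    unfolding continuous_within H_def
    by (intro Cmb_tendsto[OF lam th] ballI, use rd in \<open>auto intro: rd_rc\<close>)
  have bot: "(H \<longlongrightarrow> 0) at_bot"
  proof -
    have "(H \<longlongrightarrow> Cmb N lam \<theta> (\<lambda>i. 0)) at_bot"
      unfolding H_def
      by (intro Cmb_tendsto[OF lam th] ballI, use rd in \<open>auto intro: rd_bot\<close>)
    then show ?thesis using Cmb_const[OF lam] by simp
  qed
  have top: "(H \<longlongrightarrow> 1) at_top"
  proof -
    have "(H \<longlongrightarrow> Cmb N lam \<theta> (\<lambda>i. 1)) at_top"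
      unfolding H_def
      by (intro Cmb_tendsto[OF lam th] ballI, use rd in \<open>auto intro: rd_top\<close>)
    then show ?thesis using Cmb_const[OF lam] by simp
  qed
  define \<mu> where "\<mu> = interval_measure H"
  have r\<mu>: "real_distribution \<mu>" unfolding \<mu>_def using mono rc bot top by (rule real_distribution_interval_measure)
  have c\<mu>: "cdf \<mu> = H" unfolding \<mu>_def using mono rc bot by (rule cdf_interval_measure)
  have "VMed N lam \<theta> \<nu> = \<mu>"
    unfolding VMed_def
  proof (rule the_equality)
    show "real_distribution \<mu> \<and> (\<forall>x. cdf \<mu> x = (1 - \<theta>) * Mminus N lam (\<lambda>i. cdf (\<nu> i) x) + \<theta> * Mplus N lam (\<lambda>i. cdf (\<nu> i) x))"
      using r\<mu> c\<mu> by (simp add: H_def Cmb_def)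
  next
    fix \<mu>' assume "real_distribution \<mu>' \<and> (\<forall>x. cdf \<mu>' x = (1 - \<theta>) * Mminus N lam (\<lambda>i. cdf (\<nu> i) x) + \<theta> * Mplus N lam (\<lambda>i. cdf (\<nu> i) x))"
    then have "real_distribution \<mu>'" "cdf \<mu>' = cdf \<mu>" using c\<mu> by (auto simp: H_def Cmb_def fun_eq_iff)
    then show "\<mu>' = \<mu>" using cdf_unique r\<mu> by blast
  qed
  then show ?thesis using r\<mu> c\<mu> by simp
qed

lemma part_V:
  assumes lam: "in_simplex N lam" and th: "0 \<le> \<theta>" "\<theta> \<le> 1"
    and P: "\<forall>i\<in>{1..N}. P1 (\<nu> i)" and P': "\<forall>i\<in>{1..N}. P1 (\<nu>' i)"
  shows "W1e (VMed N lam \<theta> \<nu>) (VMed N lam \<theta> \<nu>') \<le> (\<Sum>i=1..N. W1e (\<nu> i) (\<nu>' i))"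
proof -
  have rd: "\<forall>i\<in>{1..N}. real_distribution (\<nu> i)" "\<forall>i\<in>{1..N}. real_distribution (\<nu>' i)"
    using P P' by (auto simp: P1_def)
  note V1 = VMed_eq[OF lam th rd(1)] and V2 = VMed_eq[OF lam th rd(2)]
  have "W1e (VMed N lam \<theta> \<nu>) (VMed N lam \<theta> \<nu>') = Dd (VMed N lam \<theta> \<nu>) (VMed N lam \<theta> \<nu>')"
    using V1 V2 by (intro W1e_eq_Dd) auto
  also have "\<dots> = (\<integral>\<^sup>+x. ennreal \<bar>Cmb N lam \<theta> (\<lambda>i. cdf (\<nu> i) x) - Cmb N lam \<theta> (\<lambda>i. cdf (\<nu>' i) x)\<bar> \<partial>lborel)"
    unfolding Dd_def using V1 V2 by simp
  also have "\<dots> \<le> (\<integral>\<^sup>+x. (\<Sum>i=1..N. ennreal \<bar>cdf (\<nu> i) x - cdf (\<nu>' i) x\<bar>) \<partial>lborel)"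
  proof (intro nn_integral_mono)
    fix x
    have "\<bar>Cmb N lam \<theta> (\<lambda>i. cdf (\<nu> i) x) - Cmb N lam \<theta> (\<lambda>i. cdf (\<nu>' i) x)\<bar> \<le> (\<Sum>i=1..N. \<bar>cdf (\<nu> i) x - cdf (\<nu>' i) x\<bar>)"
      by (rule Cmb_lip[OF lam th])
    then have "ennreal \<bar>Cmb N lam \<theta> (\<lambda>i. cdf (\<nu> i) x) - Cmb N lam \<theta> (\<lambda>i. cdf (\<nu>' i) x)\<bar> \<le> ennreal (\<Sum>i=1..N. \<bar>cdf (\<nu> i) x - cdf (\<nu>' i) x\<bar>)"
      by (rule ennreal_leI)
    also have "\<dots> = (\<Sum>i=1..N. ennreal \<bar>cdf (\<nu> i) x - cdf (\<nu>' i) x\<bar>)"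
      by (rule sum_ennreal[symmetric]) simp
    finally show "ennreal \<bar>Cmb N lam \<theta> (\<lambda>i. cdf (\<nu> i) x) - Cmb N lam \<theta> (\<lambda>i. cdf (\<nu>' i) x)\<bar> \<le> (\<Sum>i=1..N. ennreal \<bar>cdf (\<nu> i) x - cdf (\<nu>' i) x\<bar>)" .
  qed
  also have "\<dots> = (\<Sum>i=1..N. Dd (\<nu> i) (\<nu>' i))"
    unfolding Dd_def
  proof (rule nn_integral_sum)
    fix i assume "i \<in> {1..N}"
    then show "(\<lambda>x. ennreal \<bar>cdf (\<nu> i) x - cdf (\<nu>' i) x\<bar>) \<in> borel_measurable lborel"
      using cdf_meas[of "\<nu> i"] cdf_meas[of "\<nu>' i"] rd by simp
  qed
  also have "\<dots> = (\<Sum>i=1..N. W1e (\<nu> i) (\<nu>' i))"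
    using rd by (intro sum.cong refl W1e_eq_Dd[symmetric]) auto
  finally show ?thesis .
qed


lemma quantile_unique_le:
  assumes r1: "real_distribution \<mu>1" and r2: "real_distribution \<mu>2"
    and q: "\<forall>t\<in>{0<..<1}. quantile \<mu>1 t = quantile \<mu>2 t"
  shows "cdf \<mu>1 x \<le> cdf \<mu>2 x"
proof (rule ccontr)
  assume a: "\<not> cdf \<mu>1 x \<le> cdf \<mu>2 x"
  define t where "t = (cdf \<mu>1 x + cdf \<mu>2 x) / 2"
  have b: "0 \<le> cdf \<mu>2 x" "cdf \<mu>1 x \<le> 1"
    using real_distribution.cdf_bounded_prob[OF r1] finite_borel_measure.cdf_nonneg[OF real_distribution.finite_borel_measure_M[OF r2]] by auto
  have t: "0 < t" "t < 1" "t \<le> cdf \<mu>1 x" "\<not> t \<le> cdf \<mu>2 x" using a b unfolding t_def by auto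
  have "quantile \<mu>1 t \<le> x" using quantile_galois[OF r1 t(1,2)] t(3) by blast
  then have "quantile \<mu>2 t \<le> x" using q t(1,2) by simp
  then have "t \<le> cdf \<mu>2 x" using quantile_galois[OF r2 t(1,2)] by blast
  then show False using t(4) by simp
qed

lemma quantile_unique:
  assumes r1: "real_distribution \<mu>1" and r2: "real_distribution \<mu>2"
    and q: "\<forall>t\<in>{0<..<1}. quantile \<mu>1 t = quantile \<mu>2 t"
  shows "\<mu>1 = \<mu>2"
proof -
  have "cdf \<mu>1 x = cdf \<mu>2 x" for x
    using quantile_unique_le[OF r1 r2 q, of x] quantile_unique_le[OF r2 r1, of x] q by (simp add: antisym)
  then show ?thesis using cdf_unique[OF r1 r2] by blast
qed

lemma HMed_eq:
  assumes lam: "in_simplex N lam" and th: "0 \<le> \<theta>" "\<theta> \<le> 1"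
    and rd: "\<forall>i\<in>{1..N}. real_distribution (\<nu> i)"
  defines "G \<equiv> \<lambda>t. Cmb N lam \<theta> (\<lambda>i. quantile (\<nu> i) t)"
  shows "real_distribution (HMed N lam \<theta> \<nu>) \<and> (\<forall>t\<in>{0<..<1}. quantile (HMed N lam \<theta> \<nu>) t = G t)"
proof -
  interpret U: prob_space U by (rule prob_space_U)
  have Gmono: "G s \<le> G t" if "0 < s" "s \<le> t" "t < 1" for s t
    unfolding G_def using rd that by (intro Cmb_mono[OF lam th]) (auto intro: quantile_mono)
  have Gleft: "(G \<longlongrightarrow> G t) (at_left t)" if "0 < t" "t < 1" for t
    unfolding G_def
    by (intro Cmb_tendsto[OF lam th] ballI, use rd that in \<open>auto intro: quantile_left_cont\<close>)
  have "G \<in> borel_measurable (restrict_space borel {0<..<1})"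
    by (rule borel_measurable_mono_on_fnc) (auto intro!: mono_onI Gmono)
  moreover have "sets U = sets (restrict_space borel {0<..<1})"
    unfolding U_def by (rule sets_restrict_space_cong) simp
  ultimately have Gm: "G \<in> borel_measurable U" using measurable_cong_sets by blast
  define \<mu> where "\<mu> = distr U borel G"
  have r\<mu>: "real_distribution \<mu>" unfolding \<mu>_def using Gm by simp
  have Sx: "{s\<in>space U. G s \<le> x} \<in> sets U" for x using Gm[unfolded borel_measurable_iff_le] by blast
  have c\<mu>: "cdf \<mu> x = measure U {s\<in>space U. G s \<le> x}" for x
  proof -
    have "cdf \<mu> x = measure U (G -` {..x} \<inter> space U)"
      unfolding cdf_def \<mu>_def using Gm by (subst measure_distr) auto
    also have "G -` {..x} \<inter> space U = {s\<in>space U. G s \<le> x}" by auto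
    finally show ?thesis .
  qed
  have gal: "t \<le> cdf \<mu> x \<longleftrightarrow> G t \<le> x" if t: "0 < t" "t < 1" for t x
  proof
    assume "G t \<le> x"
    then have sub: "{0<..t} \<subseteq> {s\<in>space U. G s \<le> x}" using Gmono t by force
    have "t = measure U {0<..t}" using t by (subst measure_U) auto
    also have "\<dots> \<le> measure U {s\<in>space U. G s \<le> x}" by (rule U.finite_measure_mono[OF sub Sx])
    finally show "t \<le> cdf \<mu> x" unfolding c\<mu> .
  next
    assume le: "t \<le> cdf \<mu> x"
    show "G t \<le> x"
    proof (rule ccontr)
      assume "\<not> G t \<le> x"
      then have "x < G t" by simp
      from order_tendstoD(1)[OF Gleft[OF t] this]
      obtain b where b: "b < t" "\<And>s. b < s \<Longrightarrow> s < t \<Longrightarrow> x < G s"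
        unfolding eventually_at_left_field by blast
      define b' where "b' = max b 0"
      have sub: "{s\<in>space U. G s \<le> x} \<subseteq> {0<..b'}"
      proof
        fix s assume s: "s \<in> {s\<in>space U. G s \<le> x}"
        then have s01: "0 < s" "s < 1" "G s \<le> x" by auto
        have "\<not> t \<le> s" using Gmono[of t s] s01 t \<open>x < G t\<close> by auto
        then have "s \<le> b" using b(2)[of s] s01 by force
        then show "s \<in> {0<..b'}" using s01 unfolding b'_def by auto
      qed
      have b'01: "0 \<le> b'" "b' < t" using b t unfolding b'_def by auto
      have "cdf \<mu> x \<le> measure U {0<..b'}"
        unfolding c\<mu> using b'01 t by (intro U.finite_measure_mono[OF sub] sets_U) auto
      also have "\<dots> = b'" using b'01 t by (subst measure_U) auto
      finally show False using le b'01 by simp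
    qed
  qed
  have q\<mu>: "quantile \<mu> t = G t" if "t \<in> {0<..<1}" for t
  proof -
    have "{x. t \<le> cdf \<mu> x} = {G t..}" using gal[of t] that by auto
    then show ?thesis unfolding quantile_def by simp
  qed
  have "HMed N lam \<theta> \<nu> = \<mu>"
    unfolding HMed_def
  proof (rule the_equality)
    show "real_distribution \<mu> \<and> (\<forall>t\<in>{0<..<1}. quantile \<mu> t = (1 - \<theta>) * Mminus N lam (\<lambda>i. quantile (\<nu> i) t) + \<theta> * Mplus N lam (\<lambda>i. quantile (\<nu> i) t))"
      using r\<mu> q\<mu> by (simp add: G_def Cmb_def)
  next
    fix \<mu>' assume "real_distribution \<mu>' \<and> (\<forall>t\<in>{0<..<1}. quantile \<mu>' t = (1 - \<theta>) * Mminus N lam (\<lambda>i. quantile (\<nu> i) t) + \<theta> * Mplus N lam (\<lambda>i. quantile (\<nu> i) t))"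
    then have "real_distribution \<mu>'" "\<forall>t\<in>{0<..<1}. quantile \<mu>' t = quantile \<mu> t" using q\<mu> by (auto simp: G_def Cmb_def)
    then show "\<mu>' = \<mu>" using quantile_unique r\<mu> by blast
  qed
  then show ?thesis using r\<mu> q\<mu> by simp
qed

lemma part_H:
  assumes lam: "in_simplex N lam" and th: "0 \<le> \<theta>" "\<theta> \<le> 1"
    and P: "\<forall>i\<in>{1..N}. P1 (\<nu> i)" and P': "\<forall>i\<in>{1..N}. P1 (\<nu>' i)"
  shows "W1e (HMed N lam \<theta> \<nu>) (HMed N lam \<theta> \<nu>') \<le> (\<Sum>i=1..N. W1e (\<nu> i) (\<nu>' i))"
proof -
  have rd: "\<forall>i\<in>{1..N}. real_distribution (\<nu> i)" "\<forall>i\<in>{1..N}. real_distribution (\<nu>' i)"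
    using P P' by (auto simp: P1_def)
  note V1 = HMed_eq[OF lam th rd(1)] and V2 = HMed_eq[OF lam th rd(2)]
  have "W1e (HMed N lam \<theta> \<nu>) (HMed N lam \<theta> \<nu>') \<le> QI (HMed N lam \<theta> \<nu>) (HMed N lam \<theta> \<nu>')"
    using V1 V2 by (intro W1e_le_QI) auto
  also have "\<dots> = (\<integral>\<^sup>+t. ennreal \<bar>Cmb N lam \<theta> (\<lambda>i. quantile (\<nu> i) t) - Cmb N lam \<theta> (\<lambda>i. quantile (\<nu>' i) t)\<bar> \<partial>U)"
    unfolding QI_def using V1 V2 by (intro nn_integral_cong) simp
  also have "\<dots> \<le> (\<integral>\<^sup>+t. (\<Sum>i=1..N. ennreal \<bar>quantile (\<nu> i) t - quantile (\<nu>' i) t\<bar>) \<partial>U)"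
  proof (intro nn_integral_mono)
    fix x
    have "\<bar>Cmb N lam \<theta> (\<lambda>i. quantile (\<nu> i) x) - Cmb N lam \<theta> (\<lambda>i. quantile (\<nu>' i) x)\<bar> \<le> (\<Sum>i=1..N. \<bar>quantile (\<nu> i) x - quantile (\<nu>' i) x\<bar>)"
      by (rule Cmb_lip[OF lam th])
    then have "ennreal \<bar>Cmb N lam \<theta> (\<lambda>i. quantile (\<nu> i) x) - Cmb N lam \<theta> (\<lambda>i. quantile (\<nu>' i) x)\<bar> \<le> ennreal (\<Sum>i=1..N. \<bar>quantile (\<nu> i) x - quantile (\<nu>' i) x\<bar>)"
      by (rule ennreal_leI)
    also have "\<dots> = (\<Sum>i=1..N. ennreal \<bar>quantile (\<nu> i) x - quantile (\<nu>' i) x\<bar>)"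
      by (rule sum_ennreal[symmetric]) simp
    finally show "ennreal \<bar>Cmb N lam \<theta> (\<lambda>i. quantile (\<nu> i) x) - Cmb N lam \<theta> (\<lambda>i. quantile (\<nu>' i) x)\<bar> \<le> (\<Sum>i=1..N. ennreal \<bar>quantile (\<nu> i) x - quantile (\<nu>' i) x\<bar>)" .
  qed
  also have "\<dots> = (\<Sum>i=1..N. QI (\<nu> i) (\<nu>' i))"
    unfolding QI_def
  proof (rule nn_integral_sum)
    fix i assume "i \<in> {1..N}"
    then show "(\<lambda>x. ennreal \<bar>quantile (\<nu> i) x - quantile (\<nu>' i) x\<bar>) \<in> borel_measurable U"
      using quantile_measurable[of "\<nu> i"] quantile_measurable[of "\<nu>' i"] rd by simp
  qed
  also have "\<dots> = (\<Sum>i=1..N. W1e (\<nu> i) (\<nu>' i))"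
    using rd by (intro sum.cong refl) (simp add: QI_eq_Dd W1e_eq_Dd)
  finally show ?thesis .
qed

theorem lemma4p4:
  fixes N :: nat and lam :: "nat \<Rightarrow> real" and \<nu> \<nu>' :: "nat \<Rightarrow> real measure" and \<theta> :: real
  assumes "in_simplex N lam"
    and "\<forall>i\<in>{1..N}. P1 (\<nu> i)" and "\<forall>i\<in>{1..N}. P1 (\<nu>' i)"
    and "0 \<le> \<theta>" and "\<theta> \<le> 1"
  shows "W1 (VMed N lam \<theta> \<nu>) (VMed N lam \<theta> \<nu>') \<le> (\<Sum>i=1..N. W1 (\<nu> i) (\<nu>' i))
       \<and> W1 (HMed N lam \<theta> \<nu>) (HMed N lam \<theta> \<nu>') \<le> (\<Sum>i=1..N. W1 (\<nu> i) (\<nu>' i))"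
proof -
  have fin: "\<forall>i\<in>{1..N}. W1e (\<nu> i) (\<nu>' i) < top" using assms(2,3) W1e_finite by auto
  have sfin: "(\<Sum>i=1..N. W1e (\<nu> i) (\<nu>' i)) < top" using fin by simp
  have es: "enn2real (\<Sum>i=1..N. W1e (\<nu> i) (\<nu>' i)) = (\<Sum>i=1..N. W1 (\<nu> i) (\<nu>' i))"
    using fin by (subst enn2real_sum) (auto simp: W1_W1e)
  have "W1 (VMed N lam \<theta> \<nu>) (VMed N lam \<theta> \<nu>') \<le> enn2real (\<Sum>i=1..N. W1e (\<nu> i) (\<nu>' i))"
    unfolding W1_W1e by (rule enn2real_mono[OF part_V[OF assms(1,4,5,2,3)] sfin])
  moreover have "W1 (HMed N lam \<theta> \<nu>) (HMed N lam \<theta> \<nu>') \<le> enn2real (\<Sum>i=1..N. W1e (\<nu> i) (\<nu>' i))"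
    unfolding W1_W1e by (rule enn2real_mono[OF part_H[OF assms(1,4,5,2,3)] sfin])
  ultimately show ?thesis unfolding es by simp
qed


end
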